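(* Let $\epsilon=1/50$, let $v\ge 1$, and let $t\in\{0,1\}^v$. Suppose that for every $s\in\{0,1\}^v$ we are given a bit $b_s$ satisfying $b_s=1$ if $\langle s,t\rangle/v>\epsilon$ and $b_s=0$ if $\langle s,t\rangle/v<\epsilon/2$. Let $t'\in\{0,1\}^v$ be any vector consistent with all the $b_s$, in the sense that $\langle s,t'\rangle/v>\epsilon$ for all $s$ with $b_s=1$ and $\langle s,t'\rangle/v<\epsilon/2$ for all $s$ with $b_s=0$. Then the Hamming distance between $t$ and $t'$ is at most $v/25$.
   Context: $\langle s,t\rangle=\sum_{i=1}^v s_it_i$ is the standard inner product. *)

theory Defs
  imports Main Complex_Main
begin

definition binvecs :: "nat \<Rightarrow> nat list set" where
  "binvecs v = {xs. length xs = v \<and> set xs \<subseteq> {0, 1}}"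

definition inner_bin :: "nat \<Rightarrow> nat list \<Rightarrow> nat list \<Rightarrow> real" where
  "inner_bin v s t = (\<Sum>i<v. real (s ! i) * real (t ! i))"

definition hamming :: "nat \<Rightarrow> nat list \<Rightarrow> nat list \<Rightarrow> nat" where
  "hamming v s t = card {i. i < v \<and> s ! i \<noteq> t ! i}"

end

theory Submission
  imports Defs
begin

definition ind :: "nat \<Rightarrow> (nat \<Rightarrow> bool) \<Rightarrow> nat list" where
  "ind v P = map (\<lambda>i. if P i then 1 else 0) [0..<v]"

lemma ind_bin: "ind v P \<in> binvecs v"
  by (auto simp: ind_def binvecs_def)

lemma bin_entry: "u \<in> binvecs v \<Longrightarrow> i < v \<Longrightarrow> u ! i = 0 \<or> u ! i = 1"
  unfolding binvecs_def using nth_mem by fastforce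

lemma inner_ind: "inner_bin v (ind v P) u = (\<Sum>i\<in>{i. i<v \<and> P i}. real (u ! i))"
proof -
  have "inner_bin v (ind v P) u = (\<Sum>i<v. if P i then real (u ! i) else 0)"
    unfolding inner_bin_def ind_def by (rule sum.cong) auto
  also have "\<dots> = (\<Sum>i\<in>{i. i<v \<and> P i}. real (u ! i))"
    by (simp add: sum.If_cases lessThan_def Collect_conj_eq Int_commute)
  finally show ?thesis .
qed

theorem lemma3:
  fixes v :: nat and t t' :: "nat list" and b :: "nat list \<Rightarrow> bool" and \<epsilon> :: real
  assumes eps: "\<epsilon> = 1/50"
    and v: "v \<ge> 1"
    and t: "t \<in> binvecs v"
    and t': "t' \<in> binvecs v"
    and b1: "\<forall>s\<in>binvecs v. inner_bin v s t / real v > \<epsilon> \<longrightarrow> b s"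
    and b0: "\<forall>s\<in>binvecs v. inner_bin v s t / real v < \<epsilon> / 2 \<longrightarrow> \<not> b s"
    and c1: "\<forall>s\<in>binvecs v. b s \<longrightarrow> inner_bin v s t' / real v > \<epsilon>"
    and c0: "\<forall>s\<in>binvecs v. \<not> b s \<longrightarrow> inner_bin v s t' / real v < \<epsilon> / 2"
  shows "real (hamming v t t') \<le> real v / 25"
proof -
  define PA where "PA = (\<lambda>i. t ! i = 1 \<and> t' ! i = 0)"
  define PB where "PB = (\<lambda>i. t ! i = 0 \<and> t' ! i = 1)"
  define A where "A = {i. i<v \<and> PA i}"
  define B where "B = {i. i<v \<and> PB i}"
  have vpos: "real v > 0" using v by simp
  have fA: "finite A" "finite B" unfolding A_def B_def by auto
  have iAt: "inner_bin v (ind v PA) t = real (card A)"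
    unfolding inner_ind A_def[symmetric] by (simp add: A_def PA_def)
  have iAt': "inner_bin v (ind v PA) t' = 0"
    unfolding inner_ind by (simp add: PA_def)
  have iBt: "inner_bin v (ind v PB) t = 0"
    unfolding inner_ind by (simp add: PB_def)
  have iBt': "inner_bin v (ind v PB) t' = real (card B)"
    unfolding inner_ind B_def[symmetric] by (simp add: B_def PB_def)
  have cA: "real (card A) \<le> real v / 50"
  proof (rule ccontr)
    assume "\<not> ?thesis"
    hence "real (card A) / real v > \<epsilon>" using vpos unfolding eps by (simp add: field_simps)
    hence "b (ind v PA)" using b1 ind_bin iAt by metis
    hence "inner_bin v (ind v PA) t' / real v > \<epsilon>" using c1 ind_bin by blast
    thus False using iAt' eps by simp
  qed
  have "\<not> b (ind v PB)" using b0 ind_bin iBt eps by fastforce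
  hence "real (card B) / real v < \<epsilon>/2" using c0 ind_bin iBt' by metis
  hence cB: "real (card B) \<le> real v / 100" using vpos eps by (simp add: field_simps)
  have H: "{i. i < v \<and> t ! i \<noteq> t' ! i} = A \<union> B"
  proof -
    have "\<And>i. i < v \<Longrightarrow> (t ! i \<noteq> t' ! i) = (PA i \<or> PB i)"
      using bin_entry[OF t] bin_entry[OF t'] unfolding PA_def PB_def by fastforce
    thus ?thesis unfolding A_def B_def by auto
  qed
  have "A \<inter> B = {}" unfolding A_def B_def PA_def PB_def by auto
  hence "hamming v t t' = card A + card B"
    unfolding hamming_def H using fA card_Un_disjoint by blast
  thus ?thesis using cA cB by simp
qed

end
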